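(* Let $(h,n)=(4,2)$, let $K=\{id,(12)(34),(13)(24),(14)(23)\}\leq S_4$ be the Klein group and $U=K\times\{id\}\leq S_4\times S_2$. Then $U$ is regular, but $U$ is neither a symmetry group nor an anonymity group with respect to $(4,2)$.
   Context: Permutations compose as $(\sigma\tau)(x)=\sigma(\tau(x))$. Let $G=S_h\times S_n$ and $\mathcal{P}=(S_n)^h$ (preference profiles), with $G$ acting by $(p^{(\varphi,\psi)})_i=\psi\,p_{\varphi^{-1}(i)}$. A subgroup $U\leq G$ is regular if for every $p\in\mathcal{P}$, $\mathrm{Stab}_U(p)=\{g\in U:p^g=p\}\subseteq S_h\times\{id\}$. A social preference function (SPF) is any $F:\mathcal{P}\to S_n$; its symmetry group is $G(F)=\{(\varphi,\psi)\in G: F(p^{(\varphi,\psi)})=\psi F(p)\ \forall p\}$ and its anonymity group is $G_1(F)=G(F)\cap(S_h\times\{id\})$. $U$ is a symmetry group (resp. anonymity group) with respect to $(h,n)$ if $U=G(F)$ (resp. $U=G_1(F)$) for some SPF $F$. *)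

theory Defs
  imports "HOL-Combinatorics.Combinatorics"
begin

text \<open>Permutations of {1..n}, as functions nat => nat fixing everything outside {1..n}.
Composition is function composition: (s o t) x = s (t x).\<close>

definition Sym :: "nat \<Rightarrow> (nat \<Rightarrow> nat) set" where
  "Sym n = {s. s permutes {1..n}}"

definition profiles :: "nat \<Rightarrow> nat \<Rightarrow> (nat \<Rightarrow> nat \<Rightarrow> nat) set" where
  "profiles h n = {p. (\<forall>i\<in>{1..h}. p i \<in> Sym n) \<and> (\<forall>i. i \<notin> {1..h} \<longrightarrow> p i = id)}"

definition Gr :: "nat \<Rightarrow> nat \<Rightarrow> ((nat \<Rightarrow> nat) \<times> (nat \<Rightarrow> nat)) set" where
  "Gr h n = Sym h \<times> Sym n"

definition act :: "nat \<Rightarrow> (nat \<Rightarrow> nat) \<times> (nat \<Rightarrow> nat) \<Rightarrow> (nat \<Rightarrow> nat \<Rightarrow> nat) \<Rightarrow> (nat \<Rightarrow> nat \<Rightarrow> nat)" where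
  "act h g p = (\<lambda>i. if i \<in> {1..h} then snd g \<circ> p (inv (fst g) i) else id)"

definition regular :: "nat \<Rightarrow> nat \<Rightarrow> ((nat \<Rightarrow> nat) \<times> (nat \<Rightarrow> nat)) set \<Rightarrow> bool" where
  "regular h n U \<longleftrightarrow> (\<forall>p\<in>profiles h n. {g\<in>U. act h g p = p} \<subseteq> Sym h \<times> {id})"

definition SPF :: "nat \<Rightarrow> nat \<Rightarrow> ((nat \<Rightarrow> nat \<Rightarrow> nat) \<Rightarrow> (nat \<Rightarrow> nat)) \<Rightarrow> bool" where
  "SPF h n F \<longleftrightarrow> (\<forall>p\<in>profiles h n. F p \<in> Sym n)"

definition symgroup :: "nat \<Rightarrow> nat \<Rightarrow> ((nat \<Rightarrow> nat \<Rightarrow> nat) \<Rightarrow> (nat \<Rightarrow> nat)) \<Rightarrow> ((nat \<Rightarrow> nat) \<times> (nat \<Rightarrow> nat)) set" where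
  "symgroup h n F = {g\<in>Gr h n. \<forall>p\<in>profiles h n. F (act h g p) = snd g \<circ> F p}"

definition anongroup :: "nat \<Rightarrow> nat \<Rightarrow> ((nat \<Rightarrow> nat \<Rightarrow> nat) \<Rightarrow> (nat \<Rightarrow> nat)) \<Rightarrow> ((nat \<Rightarrow> nat) \<times> (nat \<Rightarrow> nat)) set" where
  "anongroup h n F = symgroup h n F \<inter> (Sym h \<times> {id})"

definition is_symmetry_group :: "nat \<Rightarrow> nat \<Rightarrow> ((nat \<Rightarrow> nat) \<times> (nat \<Rightarrow> nat)) set \<Rightarrow> bool" where
  "is_symmetry_group h n U \<longleftrightarrow> (\<exists>F. SPF h n F \<and> U = symgroup h n F)"

definition is_anonymity_group :: "nat \<Rightarrow> nat \<Rightarrow> ((nat \<Rightarrow> nat) \<times> (nat \<Rightarrow> nat)) set \<Rightarrow> bool" where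
  "is_anonymity_group h n U \<longleftrightarrow> (\<exists>F. SPF h n F \<and> U = anongroup h n F)"

definition Klein :: "(nat \<Rightarrow> nat) set" where
  "Klein = {id, transpose 1 2 \<circ> transpose 3 4, transpose 1 3 \<circ> transpose 2 4,
            transpose 1 4 \<circ> transpose 2 3}"

end

theory Submission
  imports Defs
begin

lemma boolcomb:
  fixes G :: "bool \<Rightarrow> bool \<Rightarrow> bool \<Rightarrow> bool \<Rightarrow> bool"
  assumes a1: "\<And>a b c d. G a b c d = G b a d c" and a2: "\<And>a b c d. G a b c d = G c d a b"
  shows "(\<forall>a b c d. G a b c d = G b a c d) \<or> (\<forall>a b c d. G a b c d = G c b a d) \<or> (\<forall>a b c d. G a b c d = G d b c a)"
proof -
  have s: "\<And>a b c d. G a b c d = G d c b a" using assms by metis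
  show ?thesis
  proof (cases "G True False True False = G True False False True")
    case True
    have "\<forall>a b c d. G a b c d = G b a c d"
      apply (intro allI) subgoal for a b c d
        by (cases a; cases b; cases c; cases d; metis a1 a2 s True) done
    then show ?thesis by blast
  next
    case f1: False
    show ?thesis
    proof (cases "G True True False False = G True False False True")
      case True
    have "\<forall>a b c d. G a b c d = G c b a d"
      apply (intro allI) subgoal for a b c d
        by (cases a; cases b; cases c; cases d; metis a1 a2 s True) done
    then show ?thesis by blast
    next
      case False
      then have T: "G True True False False = G True False True False" using f1 by blast
    have "\<forall>a b c d. G a b c d = G d b c a"
      apply (intro allI) subgoal for a b c d
        by (cases a; cases b; cases c; cases d; metis a1 a2 s T) done
    then show ?thesis by blast
    qed
  qed
qed

lemma Sym2_cases:
  assumes "s \<in> Sym 2"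
  shows "s = id \<or> s = transpose (1::nat) 2"
proof -
  have p: "s permutes {1..2}" using assms by (simp add: Sym_def)
  have out: "\<And>x. x \<notin> {1..2} \<Longrightarrow> s x = x" using p by (rule permutes_not_in)
  have s1: "s 1 \<in> {1..2}" by (simp only: permutes_in_image[OF p]) simp
  have s2: "s 2 \<in> {1..2}" by (simp only: permutes_in_image[OF p]) simp
  have ne: "s 1 \<noteq> s 2" using permutes_inj[OF p] by (simp add: inj_eq)
  have c: "(s 1 = 1 \<and> s 2 = 2) \<or> (s 1 = 2 \<and> s 2 = 1)" using s1 s2 ne by auto
  show ?thesis
  proof (cases "s 1 = 1")
    case True
    then have "s 2 = 2" using c by auto
    then have "s = id"
      apply (intro ext) subgoal for x using out[of x] True
        by (cases "x = 1"; cases "x = 2"; auto) done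
    then show ?thesis by simp
  next
    case False
    then have "s 1 = 2" "s 2 = 1" using c by auto
    then have "s = transpose 1 2"
      apply (intro ext) subgoal for x using out[of x]
        by (cases "x = 1"; cases "x = 2"; auto simp: transpose_def) done
    then show ?thesis by simp
  qed
qed

definition mk :: "(nat \<Rightarrow> nat) \<Rightarrow> (nat \<Rightarrow> nat) \<Rightarrow> (nat \<Rightarrow> nat) \<Rightarrow> (nat \<Rightarrow> nat) \<Rightarrow> nat \<Rightarrow> nat \<Rightarrow> nat" where
  "mk a b c d = (\<lambda>i. if i = 1 then a else if i = 2 then b else if i = 3 then c else if i = 4 then d else id)"

definition fb :: "bool \<Rightarrow> nat \<Rightarrow> nat" where
  "fb x = (if x then transpose 1 2 else id)"

lemma fb_Sym: "fb x \<in> Sym 2"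
  by (auto simp: fb_def Sym_def permutes_id intro: permutes_swap_id)

lemma mk_profiles: "mk (fb a) (fb b) (fb c) (fb d) \<in> profiles 4 2"
  unfolding profiles_def using fb_Sym by (auto simp: mk_def)

lemma profile_cases:
  assumes "p \<in> profiles 4 2"
  shows "\<exists>a b c d. p = mk (fb a) (fb b) (fb c) (fb d)"
proof -
  have h: "\<exists>x. p i = fb x" if i: "i \<in> {1..4}" for i
  proof -
    have "p i \<in> Sym 2" using assms i by (simp add: profiles_def)
    then have "p i = id \<or> p i = transpose 1 2" by (rule Sym2_cases)
    then show ?thesis
    proof
      assume "p i = id" then have "p i = fb False" by (simp add: fb_def)
      then show ?thesis by blast
    next
      assume "p i = transpose 1 2" then have "p i = fb True" by (simp add: fb_def)
      then show ?thesis by blast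
    qed
  qed
  have o: "\<And>i. i \<notin> {1..4} \<Longrightarrow> p i = id" using assms unfolding profiles_def by auto
  obtain a b c d where "p 1 = fb a" "p 2 = fb b" "p 3 = fb c" "p 4 = fb d"
    using h[of 1] h[of 2] h[of 3] h[of 4] by auto
  then have "p = mk (fb a) (fb b) (fb c) (fb d)"
    apply (intro ext) subgoal for i using o[of i]
      by (cases "i = 1"; cases "i = 2"; cases "i = 3"; cases "i = 4"; auto simp: mk_def) done
  then show ?thesis by blast
qed

lemma act_gen: "act 4 (\<sigma>, id) p = mk (p (inv \<sigma> 1)) (p (inv \<sigma> 2)) (p (inv \<sigma> 3)) (p (inv \<sigma> 4))"
  unfolding act_def mk_def
  apply (intro ext) subgoal for i
    by (cases "i = 1"; cases "i = 2"; cases "i = 3"; cases "i = 4"; auto) done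

lemma inv_inv_comp:
  fixes a b c d :: nat
  shows "inv (transpose a b \<circ> transpose c d) = transpose c d \<circ> transpose a b"
  by (metis bij_transpose inv_transpose_eq o_inv_distrib)

lemma Klein_Sym: "Klein \<subseteq> Sym 4"
  unfolding Klein_def Sym_def
  by (auto intro!: permutes_compose permutes_swap_id simp: permutes_id)

lemma Klein_vals: "f \<in> Klein \<Longrightarrow> (f 1, f 2, f 3) \<in> {(1::nat,2::nat,3::nat),(2,1,4),(3,4,1),(4,3,2)}"
  unfolding Klein_def by auto

lemma key:
  assumes F: "SPF 4 2 F" and sub: "Klein \<times> {id} \<subseteq> symgroup 4 2 F"
  shows "\<exists>\<sigma>. \<sigma> \<notin> Klein \<and> (\<sigma>, id) \<in> anongroup 4 2 F"
proof -
  define t :: "nat \<Rightarrow> nat" where "t = transpose 1 2"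
  define G where "G a b c d = (F (mk (fb a) (fb b) (fb c) (fb d)) = t)" for a b c d
  have Fval: "F (mk (fb a) (fb b) (fb c) (fb d)) = id \<or> F (mk (fb a) (fb b) (fb c) (fb d)) = t" for a b c d
    using F mk_profiles Sym2_cases unfolding SPF_def t_def by blast
  have Feq: "F (mk (fb a) (fb b) (fb c) (fb d)) = F (mk (fb a') (fb b') (fb c') (fb d'))"
    if "G a b c d = G a' b' c' d'" for a b c d a' b' c' d'
    using that Fval[of a b c d] Fval[of a' b' c' d'] unfolding G_def
    by auto
  have inv1: "\<And>k. k \<in> Klein \<Longrightarrow> F (act 4 (k, id) p) = F p" if "p \<in> profiles 4 2" for p
    using sub that unfolding symgroup_def by auto
  have k1: "transpose 1 2 \<circ> transpose 3 4 \<in> Klein" and k2: "transpose 1 3 \<circ> transpose 2 4 \<in> Klein"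
    unfolding Klein_def by auto
  have a1: "G a b c d = G b a d c" for a b c d
    using inv1[OF mk_profiles k1, of a b c d] unfolding G_def act_gen inv_inv_comp
    by (simp add: mk_def)
  have a2: "G a b c d = G c d a b" for a b c d
    using inv1[OF mk_profiles k2, of a b c d] unfolding G_def act_gen inv_inv_comp
    by (simp add: mk_def)
  have tr: "(transpose x y, id) \<in> anongroup 4 2 F"
    if xy: "x \<in> {1..4}" "y \<in> {1..4}" and inv: "\<And>p. p \<in> profiles 4 2 \<Longrightarrow> F (act 4 (transpose x y, id) p) = F p" for x y :: nat
  proof -
    have "transpose x y \<in> Sym 4" using xy by (simp add: Sym_def permutes_swap_id)
    moreover have "id \<in> Sym 2" by (simp add: Sym_def permutes_id)
    ultimately show ?thesis using inv unfolding anongroup_def symgroup_def Gr_def by auto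
  qed
  have nk: "transpose 1 a \<notin> Klein" if "a \<in> {2,3,4::nat}" for a
  proof
    assume "transpose 1 a \<in> Klein"
    then have "(transpose 1 a 1, transpose 1 a 2, transpose 1 a 3) \<in> {(1,2,3),(2,1,4),(3,4,1),(4,3,2)}"
      using Klein_vals by blast
    then show False using that by auto
  qed
  from boolcomb[of G, OF a1 a2] show ?thesis
  proof (elim disjE)
    assume h: "\<forall>a b c d. G a b c d = G b a c d"
    have "(transpose 1 2, id) \<in> anongroup 4 2 F"
    proof (rule tr)
      fix p assume "p \<in> profiles 4 2"
      then obtain a b c d where "p = mk (fb a) (fb b) (fb c) (fb d)" using profile_cases by blast
      then show "F (act 4 (transpose 1 2, id) p) = F p" using Feq[of b a c d a b c d] h
        unfolding act_gen by (simp add: mk_def)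
    qed auto
    then show ?thesis using nk by blast
  next
    assume h: "\<forall>a b c d. G a b c d = G c b a d"
    have "(transpose 1 3, id) \<in> anongroup 4 2 F"
    proof (rule tr)
      fix p assume "p \<in> profiles 4 2"
      then obtain a b c d where "p = mk (fb a) (fb b) (fb c) (fb d)" using profile_cases by blast
      then show "F (act 4 (transpose 1 3, id) p) = F p" using Feq[of c b a d a b c d] h
        unfolding act_gen by (simp add: mk_def)
    qed auto
    then show ?thesis using nk by blast
  next
    assume h: "\<forall>a b c d. G a b c d = G d b c a"
    have "(transpose 1 4, id) \<in> anongroup 4 2 F"
    proof (rule tr)
      fix p assume "p \<in> profiles 4 2"
      then obtain a b c d where "p = mk (fb a) (fb b) (fb c) (fb d)" using profile_cases by blast
      then show "F (act 4 (transpose 1 4, id) p) = F p" using Feq[of d b c a a b c d] h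
        unfolding act_gen by (simp add: mk_def)
    qed auto
    then show ?thesis using nk by blast
  qed
qed

theorem mainTheorem8:
  shows "regular 4 2 (Klein \<times> {id}) \<and> \<not> is_symmetry_group 4 2 (Klein \<times> {id})
         \<and> \<not> is_anonymity_group 4 2 (Klein \<times> {id})"
proof (intro conjI notI)
  show "regular 4 2 (Klein \<times> {id})"
    unfolding regular_def using Klein_Sym by auto
next
  assume "is_symmetry_group 4 2 (Klein \<times> {id})"
  then obtain F where F: "SPF 4 2 F" and U: "Klein \<times> {id} = symgroup 4 2 F"
    unfolding is_symmetry_group_def by blast
  from key[OF F] U obtain \<sigma> where "\<sigma> \<notin> Klein" "(\<sigma>, id) \<in> anongroup 4 2 F" by auto
  then show False using U unfolding anongroup_def by auto
next
  assume "is_anonymity_group 4 2 (Klein \<times> {id})"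
  then obtain F where F: "SPF 4 2 F" and U: "Klein \<times> {id} = anongroup 4 2 F"
    unfolding is_anonymity_group_def by blast
  then have "Klein \<times> {id} \<subseteq> symgroup 4 2 F" unfolding anongroup_def by auto
  from key[OF F this] obtain \<sigma> where "\<sigma> \<notin> Klein" "(\<sigma>, id) \<in> anongroup 4 2 F" by auto
  then show False using U by auto
qed

end
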